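(* Let $\alpha\in(1,\infty)$, let $p_X$ be a distribution on a finite set $\mathcal X$ and $p_{Y\mid X}$ a channel to a finite set $\mathcal Y$. Let $\tilde q^{(0)}_{Y\mid X}$ be an initial channel and, for $k\ge0$, define $$r^{(k)}_{X\mid Y}(x\mid y)=\frac{p_X(x)\tilde q^{(k)}_{Y\mid X}(y\mid x)}{\sum_{x'}p_X(x')\tilde q^{(k)}_{Y\mid X}(y\mid x')},\qquad \tilde q^{(k+1)}_{Y\mid X}(y\mid x)=\frac{p_{Y\mid X}(y\mid x)r^{(k)}_{X\mid Y}(x\mid y)^{1-1/\alpha}}{\sum_{y'}p_{Y\mid X}(y'\mid x)r^{(k)}_{X\mid Y}(x\mid y')^{1-1/\alpha}}.$$ Then $$\tilde F_\alpha^{\mathrm C}(\tilde q^{(0)}_{Y\mid X},r^{(0)}_{X\mid Y})\le\tilde F_\alpha^{\mathrm C}(\tilde q^{(1)}_{Y\mid X},r^{(0)}_{X\mid Y})\le\cdots\le\tilde F_\alpha^{\mathrm C}(\tilde q^{(k)}_{Y\mid X},r^{(k)}_{X\mid Y})\le\tilde F_\alpha^{\mathrm C}(\tilde q^{(k+1)}_{Y\mid X},r^{(k)}_{X\mid Y})\le\cdots\le I_\alpha^{\mathrm C}(X;Y).$$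
   Context: $\log$ is natural, $D$ is the Kullback–Leibler divergence, and $D_\alpha(p\|q):=\frac{1}{\alpha-1}\log\sum_zp(z)^\alpha q(z)^{1-\alpha}$ is the Rényi divergence. The Augustin–Csiszár mutual information is $I_\alpha^{\mathrm C}(X;Y):=\min_{q_Y}\sum_xp_X(x)D_\alpha(p_{Y\mid X}(\cdot\mid x)\|q_Y)$. For a channel $\tilde q_{Y\mid X}$ and a reverse channel $r_{X\mid Y}$ (a family of distributions $r_{X\mid Y}(\cdot\mid y)$ on $\mathcal X$), $\tilde F_\alpha^{\mathrm C}(\tilde q_{Y\mid X},r_{X\mid Y}):=\frac{\alpha}{1-\alpha}D(p_X\tilde q_{Y\mid X}\|p_Xp_{Y\mid X})+\mathbb E^{p_X\tilde q_{Y\mid X}}[\log\frac{r_{X\mid Y}(X\mid Y)}{p_X(X)}]$. *)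

theory Defs
  imports "HOL-Analysis.Analysis" "HOL-Library.Extended_Real"
begin

text \<open>A channel q :: 'a \<Rightarrow> 'b \<Rightarrow> real is read as q x y = q(y|x).
  A reverse channel r :: 'a \<Rightarrow> 'b \<Rightarrow> real is read as r x y = r(x|y).
  Information quantities take values in ereal, so that infinite divergences are
  represented faithfully (conventions 0 log 0 = 0, p log(p/0) = +infinity for p > 0).\<close>

definition is_dist :: "('c::finite \<Rightarrow> real) \<Rightarrow> bool" where
  "is_dist p \<longleftrightarrow> (\<forall>z. 0 \<le> p z) \<and> (\<Sum>z\<in>UNIV. p z) = 1"

definition is_channel :: "('a::finite \<Rightarrow> 'b::finite \<Rightarrow> real) \<Rightarrow> bool" where
  "is_channel W \<longleftrightarrow> (\<forall>x. is_dist (W x))"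

definition KL :: "('c::finite \<Rightarrow> real) \<Rightarrow> ('c \<Rightarrow> real) \<Rightarrow> ereal" where
  "KL P Q = (if \<exists>z. 0 < P z \<and> Q z = 0 then \<infinity>
             else ereal (\<Sum>z\<in>{z. 0 < P z}. P z * ln (P z / Q z)))"

definition renyi_div :: "real \<Rightarrow> ('c::finite \<Rightarrow> real) \<Rightarrow> ('c \<Rightarrow> real) \<Rightarrow> ereal" where
  "renyi_div \<alpha> p q = (if \<exists>z. 0 < p z \<and> q z = 0 then \<infinity>
     else ereal (1 / (\<alpha> - 1) * ln (\<Sum>z\<in>{z. 0 < p z}. p z powr \<alpha> * q z powr (1 - \<alpha>))))"

definition augustin_csiszar_MI ::
    "real \<Rightarrow> ('a::finite \<Rightarrow> real) \<Rightarrow> ('a \<Rightarrow> 'b::finite \<Rightarrow> real) \<Rightarrow> ereal" where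
  "augustin_csiszar_MI \<alpha> pX W =
     (INF qY\<in>{qY. is_dist qY}. (\<Sum>x\<in>UNIV. ereal (pX x) * renyi_div \<alpha> (W x) qY))"

definition exp_log_ratio ::
    "('a::finite \<Rightarrow> real) \<Rightarrow> ('a \<Rightarrow> 'b::finite \<Rightarrow> real) \<Rightarrow> ('a \<Rightarrow> 'b \<Rightarrow> real) \<Rightarrow> ereal" where
  "exp_log_ratio pX q r =
     (if \<exists>x y. 0 < pX x * q x y \<and> r x y = 0 then -\<infinity>
      else ereal (\<Sum>(x,y)\<in>{(x,y). 0 < pX x * q x y}. pX x * q x y * ln (r x y / pX x)))"

definition F_C ::
    "real \<Rightarrow> ('a::finite \<Rightarrow> real) \<Rightarrow> ('a \<Rightarrow> 'b::finite \<Rightarrow> real)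
     \<Rightarrow> ('a \<Rightarrow> 'b \<Rightarrow> real) \<Rightarrow> ('a \<Rightarrow> 'b \<Rightarrow> real) \<Rightarrow> ereal" where
  "F_C \<alpha> pX W q r =
     ereal (\<alpha> / (1 - \<alpha>)) * KL (\<lambda>(x,y). pX x * q x y) (\<lambda>(x,y). pX x * W x y)
     + exp_log_ratio pX q r"

definition rev_update ::
    "('a::finite \<Rightarrow> real) \<Rightarrow> ('a \<Rightarrow> 'b \<Rightarrow> real) \<Rightarrow> ('a \<Rightarrow> 'b \<Rightarrow> real)" where
  "rev_update pX q = (\<lambda>x y. pX x * q x y / (\<Sum>x'\<in>UNIV. pX x' * q x' y))"

definition ch_update ::
    "real \<Rightarrow> ('a \<Rightarrow> 'b::finite \<Rightarrow> real) \<Rightarrow> ('a \<Rightarrow> 'b \<Rightarrow> real) \<Rightarrow> ('a \<Rightarrow> 'b \<Rightarrow> real)" where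
  "ch_update \<alpha> W r = (\<lambda>x y. W x y * r x y powr (1 - 1 / \<alpha>)
                             / (\<Sum>y'\<in>UNIV. W x y' * r x y' powr (1 - 1 / \<alpha>)))"

primrec q_iter ::
    "real \<Rightarrow> ('a::finite \<Rightarrow> real) \<Rightarrow> ('a \<Rightarrow> 'b::finite \<Rightarrow> real) \<Rightarrow> ('a \<Rightarrow> 'b \<Rightarrow> real)
     \<Rightarrow> nat \<Rightarrow> ('a \<Rightarrow> 'b \<Rightarrow> real)" where
  "q_iter \<alpha> pX W q0 0 = q0"
| "q_iter \<alpha> pX W q0 (Suc k) = ch_update \<alpha> W (rev_update pX (q_iter \<alpha> pX W q0 k))"

definition r_iter ::
    "real \<Rightarrow> ('a::finite \<Rightarrow> real) \<Rightarrow> ('a \<Rightarrow> 'b::finite \<Rightarrow> real) \<Rightarrow> ('a \<Rightarrow> 'b \<Rightarrow> real)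
     \<Rightarrow> nat \<Rightarrow> ('a \<Rightarrow> 'b \<Rightarrow> real)" where
  "r_iter \<alpha> pX W q0 k = rev_update pX (q_iter \<alpha> pX W q0 k)"

end

theory Submission
  imports Defs
begin


lemma gibbs:
  fixes s a :: "'c \<Rightarrow> real"
  assumes fin: "finite S" and sp: "\<forall>z\<in>S. 0 < s z" and ap: "\<forall>z\<in>S. 0 < a z"
    and s1: "sum s S = 1"
  shows "(\<Sum>z\<in>S. s z * ln (a z / s z)) \<le> ln (sum a S)"
proof -
  have ne: "S \<noteq> {}" using s1 by auto
  define A where "A = sum a S"
  have A: "0 < A" unfolding A_def using fin ne ap by (simp add: sum_pos)
  have each: "s z * ln (a z / s z) \<le> a z / A - s z + s z * ln A" if z: "z \<in> S" for z
  proof -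
    have sz: "0 < s z" and az: "0 < a z" using z sp ap by auto
    have "ln (a z / s z) = ln (a z / (s z * A)) + ln A"
      using sz az A by (simp add: ln_div ln_mult)
    moreover have "ln (a z / (s z * A)) \<le> a z / (s z * A) - 1"
      using sz az A by (intro ln_le_minus_one) simp
    ultimately have "ln (a z / s z) \<le> a z / (s z * A) - 1 + ln A" by simp
    hence "s z * ln (a z / s z) \<le> s z * (a z / (s z * A) - 1 + ln A)"
      using sz by (simp add: mult_left_mono)
    also have "\<dots> = a z / A - s z + s z * ln A" using sz A by (simp add: field_simps)
    finally show ?thesis .
  qed
  have "(\<Sum>z\<in>S. s z * ln (a z / s z)) \<le> (\<Sum>z\<in>S. a z / A - s z + s z * ln A)"
    by (rule sum_mono) (use each in auto)
  also have "\<dots> = sum a S / A - sum s S + sum s S * ln A"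
    by (simp add: sum.distrib sum_subtractf sum_divide_distrib sum_distrib_right)
  also have "\<dots> = ln A" using A s1 by (simp add: A_def)
  finally show ?thesis by (simp add: A_def)
qed

definition PS :: "('a::finite \<Rightarrow> real) \<Rightarrow> ('a \<Rightarrow> 'b::finite \<Rightarrow> real) \<Rightarrow> ('a \<times> 'b) set" where
  "PS pX q = {(x,y). 0 < pX x * q x y}"

definition Lr :: "real \<Rightarrow> ('a::finite \<Rightarrow> real) \<Rightarrow> ('a \<Rightarrow> 'b::finite \<Rightarrow> real)
     \<Rightarrow> ('a \<Rightarrow> 'b \<Rightarrow> real) \<Rightarrow> ('a \<Rightarrow> 'b \<Rightarrow> real) \<Rightarrow> real" where
  "Lr \<alpha> pX W q r = (\<Sum>(x,y)\<in>PS pX q. pX x * q x y *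
      (\<alpha> / (1 - \<alpha>) * ln (q x y / W x y) + ln (r x y / pX x)))"

lemma PS_pos:
  assumes "\<forall>x. 0 \<le> pX x" "\<forall>x y. 0 \<le> q x y" "(x,y) \<in> PS pX q"
  shows "0 < pX x" "0 < q x y"
proof -
  have "0 < pX x * q x y" using assms(3) by (simp add: PS_def)
  moreover have "0 \<le> pX x" "0 \<le> q x y" using assms by auto
  ultimately show "0 < pX x" "0 < q x y" by (auto simp: zero_less_mult_iff)
qed

lemma F_fin:
  assumes p0: "\<forall>x. 0 \<le> pX x" and q0: "\<forall>x y. 0 \<le> q x y"
    and pos: "\<forall>(x,y)\<in>PS pX q. 0 < W x y \<and> 0 < r x y"
  shows "F_C \<alpha> pX W q r = ereal (Lr \<alpha> pX W q r)"
proof -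
  have set: "{z. 0 < (\<lambda>(x,y). pX x * q x y) z} = PS pX q" by (auto simp: PS_def)
  have nc: "\<not> (\<exists>z. 0 < (\<lambda>(x,y). pX x * q x y) z \<and> (\<lambda>(x,y). pX x * W x y) z = 0)"
  proof
    assume "\<exists>z. 0 < (\<lambda>(x,y). pX x * q x y) z \<and> (\<lambda>(x,y). pX x * W x y) z = 0"
    then obtain x y where "(x,y) \<in> PS pX q" "pX x * W x y = 0" by (auto simp: PS_def)
    with pos PS_pos[OF p0 q0] show False by fastforce
  qed
  have KL: "KL (\<lambda>(x,y). pX x * q x y) (\<lambda>(x,y). pX x * W x y)
      = ereal (\<Sum>(x,y)\<in>PS pX q. pX x * q x y * ln (q x y / W x y))"
    unfolding KL_def using nc
    apply (simp only: if_False set)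
    apply (intro arg_cong[where f=ereal] sum.cong refl)
    using PS_pos[OF p0 q0] by auto
  have nc2: "\<not> (\<exists>x y. 0 < pX x * q x y \<and> r x y = 0)"
    using pos by (force simp: PS_def)
  have E: "exp_log_ratio pX q r = ereal (\<Sum>(x,y)\<in>PS pX q. pX x * q x y * ln (r x y / pX x))"
    unfolding exp_log_ratio_def using nc2 by (simp add: PS_def)
  show ?thesis
    unfolding F_C_def KL E Lr_def
    by (simp add: sum_distrib_left sum.distrib[symmetric] case_prod_beta algebra_simps)
qed

lemma KL_not_minf: "KL P Q \<noteq> -\<infinity>" by (simp add: KL_def)
lemma elr_not_inf: "exp_log_ratio pX q r \<noteq> \<infinity>" by (simp add: exp_log_ratio_def)

lemma F_ninf:
  assumes a1: "1 < \<alpha>" and p0: "\<forall>x. 0 \<le> pX x" and q0: "\<forall>x y. 0 \<le> q x y"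
    and ex: "\<exists>(x,y)\<in>PS pX q. W x y = 0 \<or> r x y = 0"
  shows "F_C \<alpha> pX W q r = -\<infinity>"
proof -
  have neg: "\<alpha> / (1 - \<alpha>) < 0" using a1 by (simp add: divide_pos_neg)
  define K where "K = KL (\<lambda>(x,y). pX x * q x y) (\<lambda>(x,y). pX x * W x y)"
  define E where "E = exp_log_ratio pX q r"
  have F: "F_C \<alpha> pX W q r = ereal (\<alpha> / (1 - \<alpha>)) * K + E" by (simp add: F_C_def K_def E_def)
  have Kn: "K \<noteq> -\<infinity>" by (simp add: K_def KL_not_minf)
  have En: "E \<noteq> \<infinity>" by (simp add: E_def elr_not_inf)
  have cK: "ereal (\<alpha> / (1 - \<alpha>)) * K \<noteq> \<infinity>" using Kn neg by (cases K) auto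
  obtain x y where xy: "(x,y) \<in> PS pX q" "W x y = 0 \<or> r x y = 0" using ex by auto
  show ?thesis
  proof (cases "W x y = 0")
    case True
    have "K = \<infinity>" unfolding K_def KL_def using xy True by (auto simp: PS_def)
    hence h: "ereal (\<alpha> / (1 - \<alpha>)) * K = -\<infinity>" using neg a1 by simp
    show ?thesis unfolding F h using En by (cases E) auto
  next
    case False
    hence "r x y = 0" using xy by simp
    hence "E = -\<infinity>" unfolding E_def exp_log_ratio_def using xy by (auto simp: PS_def)
    thus ?thesis unfolding F using cK by (cases "ereal (\<alpha> / (1 - \<alpha>)) * K") auto
  qed
qed



lemma PS_Sigma:
  assumes "\<forall>x. 0 \<le> pX x" "\<forall>x y. 0 \<le> q x y"
  shows "PS pX q = Sigma {x. 0 < pX x} (\<lambda>x. {y. 0 < q x y})"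
  using assms unfolding PS_def by (auto simp: zero_less_mult_iff) (meson not_le)+

lemma mass:
  fixes pX :: "'a::finite \<Rightarrow> real" and q :: "'a \<Rightarrow> 'b::finite \<Rightarrow> real"
  assumes pd: "is_dist pX" and q0: "\<forall>x y. 0 \<le> q x y"
    and q1: "\<forall>x. 0 < pX x \<longrightarrow> sum (q x) UNIV = 1"
  shows "(\<Sum>(x,y)\<in>PS pX q. pX x * q x y) = 1"
proof -
  have p0: "\<forall>x. 0 \<le> pX x" and p1: "sum pX UNIV = 1" using pd by (auto simp: is_dist_def)
  have "(\<Sum>(x,y)\<in>PS pX q. pX x * q x y) = (\<Sum>(x,y)\<in>UNIV. pX x * q x y)"
  proof (rule sum.mono_neutral_left)
    show "\<forall>i\<in>UNIV - PS pX q. (case i of (x, y) \<Rightarrow> pX x * q x y) = 0"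
      using p0 q0 by (auto simp: PS_def) (metis less_eq_real_def mult_pos_pos)
  qed auto
  also have "\<dots> = (\<Sum>x\<in>UNIV. \<Sum>y\<in>UNIV. pX x * q x y)"
    by (simp add: sum.cartesian_product' flip: UNIV_Times_UNIV)
  also have "\<dots> = (\<Sum>x\<in>UNIV. pX x)"
  proof (rule sum.cong)
    fix x :: 'a
    show "(\<Sum>y\<in>UNIV. pX x * q x y) = pX x"
    proof (cases "pX x = 0")
      case False
      hence "0 < pX x" using p0[rule_format, of x] by linarith
      thus ?thesis using q1 by (simp add: sum_distrib_left[symmetric])
    qed simp
  qed simp
  finally show ?thesis using p1 by simp
qed

lemma G2:
  fixes pX :: "'a::finite \<Rightarrow> real" and q r :: "'a \<Rightarrow> 'b::finite \<Rightarrow> real" and g :: "'b \<Rightarrow> real"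
  assumes pd: "is_dist pX" and q0: "\<forall>x y. 0 \<le> q x y"
    and q1: "\<forall>x. 0 < pX x \<longrightarrow> sum (q x) UNIV = 1"
    and r0: "\<forall>x y. 0 \<le> r x y" and r1: "\<forall>y. (\<Sum>x\<in>UNIV. r x y) \<le> 1"
    and g0: "\<forall>y. 0 \<le> g y" and g1: "sum g UNIV \<le> 1"
    and pos: "\<forall>(x,y)\<in>PS pX q. 0 < r x y * g y"
  shows "(\<Sum>(x,y)\<in>PS pX q. pX x * q x y * ln (r x y * g y / (pX x * q x y))) \<le> 0"
proof -
  have p0: "\<forall>x. 0 \<le> pX x" using pd by (auto simp: is_dist_def)
  let ?s = "\<lambda>(x,y). pX x * q x y" and ?a = "\<lambda>(x,y). r x y * g y"
  have m: "sum ?s (PS pX q) = 1" using mass[OF pd q0 q1] by simp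
  have "(\<Sum>(x,y)\<in>PS pX q. pX x * q x y * ln (r x y * g y / (pX x * q x y)))
      = (\<Sum>z\<in>PS pX q. ?s z * ln (?a z / ?s z))"
    by (simp add: case_prod_beta)
  also have "\<dots> \<le> ln (sum ?a (PS pX q))"
  proof (rule gibbs)
    show "\<forall>z\<in>PS pX q. 0 < ?s z" by (auto simp: PS_def)
    show "\<forall>z\<in>PS pX q. 0 < ?a z" using pos by auto
  qed (use m in auto)
  also have "\<dots> \<le> ln 1"
  proof (rule ln_mono)
    have ne: "PS pX q \<noteq> {}" using m by auto
    show "0 < sum ?a (PS pX q)" using pos ne by (intro sum_pos) auto
    have "sum ?a (PS pX q) \<le> sum ?a UNIV"
      by (rule sum_mono2) (use r0 g0 in auto)
    also have "\<dots> = (\<Sum>x\<in>UNIV. \<Sum>y\<in>UNIV. r x y * g y)"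
      by (simp add: sum.cartesian_product' flip: UNIV_Times_UNIV)
    also have "\<dots> = (\<Sum>y\<in>UNIV. g y * (\<Sum>x\<in>UNIV. r x y))"
      by (subst sum.swap) (simp add: sum_distrib_left mult.commute)
    also have "\<dots> \<le> (\<Sum>y\<in>UNIV. g y * 1)"
      by (rule sum_mono, rule mult_left_mono) (use r1 g0 in auto)
    also have "\<dots> \<le> 1" using g1 by simp
    finally show "sum ?a (PS pX q) \<le> 1" .
  qed
  finally show ?thesis by simp
qed

lemma Lr_sigma:
  assumes "\<forall>x. 0 \<le> pX x" "\<forall>x y. 0 \<le> q x y"
  shows "Lr \<alpha> pX W q r = (\<Sum>x\<in>{x. 0 < pX x}. pX x * (\<Sum>y\<in>{y. 0 < q x y}. q x y *
      (\<alpha> / (1 - \<alpha>) * ln (q x y / W x y) + ln (r x y / pX x))))"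
  unfolding Lr_def PS_Sigma[OF assms]
  by (subst sum.Sigma[symmetric]) (auto simp: sum_distrib_left mult.assoc)

lemma ident1:
  fixes \<alpha> q w t :: real
  assumes a1: "1 < \<alpha>" and q: "0 < q" and w: "0 < w" and t: "0 < t"
  shows "\<alpha> / (1 - \<alpha>) * ln (q / w) + ln (q / t)
       = 1 / (\<alpha> - 1) * ln (w powr \<alpha> * t powr (1 - \<alpha>) / q)"
proof -
  have h1: "ln (w powr \<alpha> * t powr (1 - \<alpha>) / q) = \<alpha> * ln w + (1 - \<alpha>) * ln t - ln q"
  proof -
    have p1: "0 < w powr \<alpha>" "0 < t powr (1 - \<alpha>)" using w t by (simp_all add: powr_gt_zero)
    have "ln (w powr \<alpha> * t powr (1 - \<alpha>) / q) = ln (w powr \<alpha> * t powr (1 - \<alpha>)) - ln q"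
      using p1 q by (simp add: ln_div)
    also have "ln (w powr \<alpha> * t powr (1 - \<alpha>)) = ln (w powr \<alpha>) + ln (t powr (1 - \<alpha>))"
      using p1 by (simp add: ln_mult)
    finally show ?thesis by (simp add: ln_powr)
  qed
  have h2: "ln (q / w) = ln q - ln w" "ln (q / t) = ln q - ln t"
    using q w t by (simp_all add: ln_div)
  have "\<alpha> - 1 \<noteq> 0" "1 - \<alpha> \<noteq> 0" using a1 by auto
  then show ?thesis unfolding h1 h2 by (simp add: field_simps)
qed

lemma ident3:
  fixes \<alpha> q w r p :: real
  assumes a1: "1 < \<alpha>" and q: "0 < q" and w: "0 < w" and r: "0 < r" and p: "0 < p"
  shows "\<alpha> / (1 - \<alpha>) * ln (q / w) + ln (r / p)
       = \<alpha> / (\<alpha> - 1) * ln (w * r powr (1 - 1 / \<alpha>) / q) - ln p"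
proof -
  have h1: "ln (w * r powr (1 - 1 / \<alpha>) / q) = ln w + (1 - 1 / \<alpha>) * ln r - ln q"
  proof -
    have p1: "0 < r powr (1 - 1 / \<alpha>)" using r by (simp add: powr_gt_zero)
    have "ln (w * r powr (1 - 1 / \<alpha>) / q) = ln (w * r powr (1 - 1 / \<alpha>)) - ln q"
      using p1 q w by (simp add: ln_div)
    also have "ln (w * r powr (1 - 1 / \<alpha>)) = ln w + ln (r powr (1 - 1 / \<alpha>))"
      using p1 w by (simp add: ln_mult)
    finally show ?thesis by (simp add: ln_powr)
  qed
  have h2: "ln (q / w) = ln q - ln w" "ln (r / p) = ln r - ln p"
    using q w r p by (simp_all add: ln_div)
  have "\<alpha> - 1 \<noteq> 0" "1 - \<alpha> \<noteq> 0" "\<alpha> \<noteq> 0" using a1 by auto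
  then show ?thesis unfolding h1 h2 by (simp add: field_simps)
qed

lemma sumQ:
  fixes q :: "'b::finite \<Rightarrow> real"
  assumes "\<forall>y. 0 \<le> q y" "sum q UNIV = 1"
  shows "sum q {y. 0 < q y} = 1"
proof -
  have "sum q {y. 0 < q y} = sum q UNIV"
    by (rule sum.mono_neutral_left) (use assms(1) in \<open>auto simp: less_eq_real_def\<close>)
  thus ?thesis using assms by simp
qed

lemma mass2:
  fixes pX :: "'a::finite \<Rightarrow> real" and q :: "'a \<Rightarrow> 'b::finite \<Rightarrow> real"
  assumes pd: "is_dist pX" and q1: "\<forall>x. 0 < pX x \<longrightarrow> sum (q x) UNIV = 1"
  shows "(\<Sum>x\<in>UNIV. \<Sum>y\<in>UNIV. pX x * q x y) = 1"
proof -
  have p0: "\<forall>x. 0 \<le> pX x" and p1: "sum pX UNIV = 1" using pd by (auto simp: is_dist_def)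
  have "(\<Sum>x\<in>UNIV. \<Sum>y\<in>UNIV. pX x * q x y) = (\<Sum>x\<in>UNIV. pX x)"
  proof (rule sum.cong)
    fix x :: 'a
    show "(\<Sum>y\<in>UNIV. pX x * q x y) = pX x"
    proof (cases "pX x = 0")
      case False
      hence "0 < pX x" using p0[rule_format, of x] by linarith
      thus ?thesis using q1 by (simp add: sum_distrib_left[symmetric])
    qed simp
  qed simp
  thus ?thesis using p1 by simp
qed

lemma upper:
  fixes pX :: "'a::finite \<Rightarrow> real" and W q r :: "'a \<Rightarrow> 'b::finite \<Rightarrow> real" and qY :: "'b \<Rightarrow> real"
  assumes a1: "1 < \<alpha>" and pd: "is_dist pX" and Wc: "is_channel W"
    and q0: "\<forall>x y. 0 \<le> q x y" and q1: "\<forall>x. 0 < pX x \<longrightarrow> sum (q x) UNIV = 1"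
    and r0: "\<forall>x y. 0 \<le> r x y" and r1: "\<forall>y. (\<Sum>x\<in>UNIV. r x y) \<le> 1"
    and qd: "is_dist qY"
  shows "F_C \<alpha> pX W q r \<le> (\<Sum>x\<in>UNIV. ereal (pX x) * renyi_div \<alpha> (W x) qY)"
proof -
  have p0: "\<forall>x. 0 \<le> pX x" using pd by (auto simp: is_dist_def)
  have W0: "\<forall>x y. 0 \<le> W x y" using Wc by (auto simp: is_channel_def is_dist_def)
  have t0: "\<forall>y. 0 \<le> qY y" and t1: "sum qY UNIV = 1" using qd by (auto simp: is_dist_def)
  show ?thesis
  proof (cases "\<exists>(x,y)\<in>PS pX q. W x y = 0 \<or> r x y = 0")
    case True
    thus ?thesis using F_ninf[OF a1 p0 q0 True] by simp
  next
    case nA: False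
    have pos: "\<forall>(x,y)\<in>PS pX q. 0 < W x y \<and> 0 < r x y"
    proof (intro ballI, clarify)
      fix x y assume "(x,y) \<in> PS pX q"
      hence "W x y \<noteq> 0" "r x y \<noteq> 0" using nA by auto
      thus "0 < W x y \<and> 0 < r x y" using W0 r0 by (metis less_eq_real_def)
    qed
    show ?thesis
    proof (cases "\<exists>x. 0 < pX x \<and> (\<exists>z. 0 < W x z \<and> qY z = 0)")
      case True
      then obtain x z where xz: "0 < pX x" "0 < W x z" "qY z = 0" by auto
      have "renyi_div \<alpha> (W x) qY = \<infinity>" using xz by (auto simp: renyi_div_def)
      hence "ereal (pX x) * renyi_div \<alpha> (W x) qY = \<infinity>" using xz by simp
      hence "(\<Sum>x\<in>UNIV. ereal (pX x) * renyi_div \<alpha> (W x) qY) = \<infinity>"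
        by (intro sum_Pinfty[THEN iffD2]) auto
      thus ?thesis by simp
    next
      case nB: False
      define R where "R x = 1 / (\<alpha> - 1) *
         ln (\<Sum>z\<in>{z. 0 < W x z}. W x z powr \<alpha> * qY z powr (1 - \<alpha>))" for x
      have RHS: "(\<Sum>x\<in>UNIV. ereal (pX x) * renyi_div \<alpha> (W x) qY) = ereal (\<Sum>x\<in>UNIV. pX x * R x)"
        unfolding sum_ereal[symmetric]
      proof (rule sum.cong[OF refl])
        fix x
        show "ereal (pX x) * renyi_div \<alpha> (W x) qY = ereal (pX x * R x)"
        proof (cases "pX x = 0")
          case False
          hence "0 < pX x" using p0[rule_format, of x] by linarith
          hence "renyi_div \<alpha> (W x) qY = ereal (R x)"
            using nB by (auto simp: renyi_div_def R_def)
          thus ?thesis by simp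
        qed (simp add: zero_ereal_def[symmetric])
      qed
      have qYpos: "0 < qY y" if "(x,y) \<in> PS pX q" for x y
      proof -
        have "0 < pX x" using PS_pos[OF p0 q0 that] by simp
        moreover have "0 < W x y" using pos that by auto
        ultimately have "qY y \<noteq> 0" using nB by auto
        thus ?thesis using t0 by (metis less_eq_real_def)
      qed
      define T where "T x y = \<alpha> / (1 - \<alpha>) * ln (q x y / W x y) + ln (q x y / qY y)" for x y
      have split: "Lr \<alpha> pX W q r = (\<Sum>(x,y)\<in>PS pX q. pX x * q x y * T x y)
          + (\<Sum>(x,y)\<in>PS pX q. pX x * q x y * ln (r x y * qY y / (pX x * q x y)))"
        unfolding Lr_def sum.distrib[symmetric]
      proof (rule sum.cong[OF refl], clarify)
        fix x y assume xy: "(x,y) \<in> PS pX q"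
        have a: "0 < pX x" "0 < q x y" using PS_pos[OF p0 q0 xy] by auto
        have b: "0 < W x y" "0 < r x y" using pos xy by auto
        have c: "0 < qY y" using qYpos xy by auto
        have "ln (r x y / pX x) = ln (q x y / qY y) + ln (r x y * qY y / (pX x * q x y))"
          using a b c by (simp add: ln_div ln_mult)
        thus "pX x * q x y * (\<alpha> / (1 - \<alpha>) * ln (q x y / W x y) + ln (r x y / pX x)) =
           pX x * q x y * T x y + pX x * q x y * ln (r x y * qY y / (pX x * q x y))"
          by (simp add: T_def algebra_simps)
      qed
      have second: "(\<Sum>(x,y)\<in>PS pX q. pX x * q x y * ln (r x y * qY y / (pX x * q x y))) \<le> 0"
      proof (rule G2[OF pd q0 q1 r0 r1 t0])
        show "sum qY UNIV \<le> 1" using t1 by simp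
        show "\<forall>(x,y)\<in>PS pX q. 0 < r x y * qY y" using pos qYpos by auto
      qed
      have perx: "(\<Sum>y\<in>{y. 0 < q x y}. q x y * T x y) \<le> R x" if px: "0 < pX x" for x
      proof -
        let ?a = "\<lambda>y. W x y powr \<alpha> * qY y powr (1 - \<alpha>)"
        have inPS: "(x,y) \<in> PS pX q" if "0 < q x y" for y using px that by (simp add: PS_def)
        have Qs: "sum (q x) {y. 0 < q x y} = 1" using sumQ q0 q1 px by auto
        have apos: "0 < ?a y" if "0 < q x y" for y
        proof -
          have "0 < W x y" "0 < qY y" using pos qYpos inPS[OF that] by auto
          thus ?thesis by (simp add: powr_gt_zero)
        qed
        have "(\<Sum>y\<in>{y. 0 < q x y}. q x y * T x y)
            = 1 / (\<alpha> - 1) * (\<Sum>y\<in>{y. 0 < q x y}. q x y * ln (?a y / q x y))"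
          unfolding sum_distrib_left
        proof (rule sum.cong[OF refl])
          fix y assume "y \<in> {y. 0 < q x y}"
          hence y: "0 < q x y" by simp
          have "T x y = 1 / (\<alpha> - 1) * ln (?a y / q x y)"
            unfolding T_def using ident1[OF a1 y] pos qYpos inPS[OF y] by auto
          thus "q x y * T x y = 1 / (\<alpha> - 1) * (q x y * ln (?a y / q x y))" by simp
        qed
        also have "\<dots> \<le> 1 / (\<alpha> - 1) * ln (sum ?a {y. 0 < q x y})"
          using a1 by (intro mult_left_mono gibbs) (use Qs apos in auto)
        also have "\<dots> \<le> R x" unfolding R_def
        proof (intro mult_left_mono ln_mono)
          have ne: "{y. 0 < q x y} \<noteq> {}" using Qs by (metis sum.empty zero_neq_one)
          show "0 < sum ?a {y. 0 < q x y}" using ne apos by (intro sum_pos) auto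
          show "sum ?a {y. 0 < q x y} \<le> sum ?a {z. 0 < W x z}"
            by (rule sum_mono2) (use pos inPS in auto)
        qed (use a1 in auto)
        finally show ?thesis .
      qed
      have first: "(\<Sum>(x,y)\<in>PS pX q. pX x * q x y * T x y) \<le> (\<Sum>x\<in>UNIV. pX x * R x)"
      proof -
        have "(\<Sum>(x,y)\<in>PS pX q. pX x * q x y * T x y)
            = (\<Sum>x\<in>{x. 0 < pX x}. pX x * (\<Sum>y\<in>{y. 0 < q x y}. q x y * T x y))"
          unfolding PS_Sigma[OF p0 q0]
          by (subst sum.Sigma[symmetric]) (auto simp: sum_distrib_left mult.assoc)
        also have "\<dots> \<le> (\<Sum>x\<in>{x. 0 < pX x}. pX x * R x)"
          by (rule sum_mono, rule mult_left_mono) (use perx in auto)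
        also have "\<dots> = (\<Sum>x\<in>UNIV. pX x * R x)"
          by (rule sum.mono_neutral_left) (use p0 in \<open>auto simp: less_eq_real_def\<close>)
        finally show ?thesis .
      qed
      have "F_C \<alpha> pX W q r = ereal (Lr \<alpha> pX W q r)" by (rule F_fin[OF p0 q0 pos])
      also have "\<dots> \<le> ereal (\<Sum>x\<in>UNIV. pX x * R x)" using split first second by simp
      finally show ?thesis using RHS by simp
    qed
  qed
qed

lemma rstep:
  fixes pX :: "'a::finite \<Rightarrow> real" and W q r :: "'a \<Rightarrow> 'b::finite \<Rightarrow> real"
  assumes a1: "1 < \<alpha>" and pd: "is_dist pX" and Wc: "is_channel W"
    and q0: "\<forall>x y. 0 \<le> q x y" and q1: "\<forall>x. 0 < pX x \<longrightarrow> sum (q x) UNIV = 1"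
    and r0: "\<forall>x y. 0 \<le> r x y" and r1: "\<forall>y. (\<Sum>x\<in>UNIV. r x y) \<le> 1"
  shows "F_C \<alpha> pX W q r \<le> F_C \<alpha> pX W q (rev_update pX q)"
proof -
  have W0: "\<forall>x y. 0 \<le> W x y" using Wc by (auto simp: is_channel_def is_dist_def)
  have p0: "\<forall>x. 0 \<le> pX x" using pd by (auto simp: is_dist_def)
  define D where "D y = (\<Sum>x\<in>UNIV. pX x * q x y)" for y
  have r'eq: "rev_update pX q x y = pX x * q x y / D y" for x y
    by (simp add: rev_update_def D_def)
  have D0: "\<forall>y. 0 \<le> D y" unfolding D_def using p0 q0 by (auto intro: sum_nonneg)
  have D1: "sum D UNIV \<le> 1" unfolding D_def using mass2[OF pd q1] by (subst sum.swap) simp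
  have Dpos: "0 < D y" if "(x,y) \<in> PS pX q" for x y
  proof -
    have "pX x * q x y \<le> D y" unfolding D_def
      by (rule member_le_sum) (use p0 q0 in auto)
    thus ?thesis using that by (simp add: PS_def)
  qed
  show ?thesis
  proof (cases "\<exists>(x,y)\<in>PS pX q. W x y = 0")
    case True
    hence "\<exists>(x,y)\<in>PS pX q. W x y = 0 \<or> r x y = 0"
      "\<exists>(x,y)\<in>PS pX q. W x y = 0 \<or> rev_update pX q x y = 0" by auto
    thus ?thesis using F_ninf[OF a1 p0 q0] by simp
  next
    case nW: False
    show ?thesis
    proof (cases "\<exists>(x,y)\<in>PS pX q. r x y = 0")
      case True
      hence "\<exists>(x,y)\<in>PS pX q. W x y = 0 \<or> r x y = 0" by auto
      thus ?thesis using F_ninf[OF a1 p0 q0] by simp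
    next
      case nr: False
      have Wp: "0 < W x y" if "(x,y) \<in> PS pX q" for x y
        using nW W0 that by (metis (mono_tags, lifting) case_prodI less_eq_real_def)
      have pos: "\<forall>(x,y)\<in>PS pX q. 0 < W x y \<and> 0 < r x y"
        using nr r0 Wp by (force simp: less_eq_real_def)
      have pos': "\<forall>(x,y)\<in>PS pX q. 0 < W x y \<and> 0 < rev_update pX q x y"
        using Wp Dpos by (auto simp: r'eq PS_def)
      have split: "Lr \<alpha> pX W q r = Lr \<alpha> pX W q (rev_update pX q)
          + (\<Sum>(x,y)\<in>PS pX q. pX x * q x y * ln (r x y * D y / (pX x * q x y)))"
        unfolding Lr_def sum.distrib[symmetric]
      proof (rule sum.cong[OF refl], clarify)
        fix x y assume xy: "(x,y) \<in> PS pX q"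
        have a: "0 < pX x" "0 < q x y" using PS_pos[OF p0 q0 xy] by auto
        have b: "0 < r x y" "0 < D y" using pos Dpos xy by auto
        have "ln (r x y / pX x) = ln (rev_update pX q x y / pX x) + ln (r x y * D y / (pX x * q x y))"
          using a b by (simp add: r'eq ln_div ln_mult)
        thus "pX x * q x y * (\<alpha> / (1 - \<alpha>) * ln (q x y / W x y) + ln (r x y / pX x)) =
           pX x * q x y * (\<alpha> / (1 - \<alpha>) * ln (q x y / W x y) + ln (rev_update pX q x y / pX x))
           + pX x * q x y * ln (r x y * D y / (pX x * q x y))"
          by (simp add: algebra_simps)
      qed
      have "(\<Sum>(x,y)\<in>PS pX q. pX x * q x y * ln (r x y * D y / (pX x * q x y))) \<le> 0"
        by (rule G2[OF pd q0 q1 r0 r1 D0 D1]) (use pos Dpos in auto)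
      hence "Lr \<alpha> pX W q r \<le> Lr \<alpha> pX W q (rev_update pX q)" using split by simp
      thus ?thesis using F_fin[OF p0 q0 pos] F_fin[OF p0 q0 pos'] by simp
    qed
  qed
qed

lemma qstep:
  fixes pX :: "'a::finite \<Rightarrow> real" and W q r :: "'a \<Rightarrow> 'b::finite \<Rightarrow> real"
  assumes a1: "1 < \<alpha>" and pd: "is_dist pX" and Wc: "is_channel W"
    and q0: "\<forall>x y. 0 \<le> q x y" and q1: "\<forall>x. 0 < pX x \<longrightarrow> sum (q x) UNIV = 1"
    and r0: "\<forall>x y. 0 \<le> r x y"
    and Zp: "\<forall>x. 0 < pX x \<longrightarrow> 0 < (\<Sum>y\<in>UNIV. W x y * r x y powr (1 - 1 / \<alpha>))"
  shows "F_C \<alpha> pX W q r \<le> F_C \<alpha> pX W (ch_update \<alpha> W r) r"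
proof -
  have p0: "\<forall>x. 0 \<le> pX x" using pd by (auto simp: is_dist_def)
  have W0: "\<forall>x y. 0 \<le> W x y" using Wc by (auto simp: is_channel_def is_dist_def)
  define b where "b = 1 - 1 / \<alpha>"
  define c where "c = \<alpha> / (\<alpha> - 1)"
  define Z where "Z x = (\<Sum>y\<in>UNIV. W x y * r x y powr b)" for x
  define q' where "q' = ch_update \<alpha> W r"
  have q'eq: "q' x y = W x y * r x y powr b / Z x" for x y
    by (simp add: q'_def ch_update_def Z_def b_def)
  have Z0: "0 \<le> Z x" for x unfolding Z_def using W0 by (auto intro: sum_nonneg)
  have q'0: "\<forall>x y. 0 \<le> q' x y" using W0 Z0 by (auto simp: q'eq)
  have q'1: "\<forall>x. 0 < pX x \<longrightarrow> sum (q' x) UNIV = 1"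
  proof (intro allI impI)
    fix x assume "0 < pX x"
    hence "0 < Z x" using Zp by (simp add: Z_def b_def)
    thus "sum (q' x) UNIV = 1" by (simp add: q'eq sum_divide_distrib[symmetric] Z_def)
  qed
  have q'pos: "0 < W x y \<and> 0 < r x y" if "0 < q' x y" for x y
  proof -
    have "W x y \<noteq> 0" "r x y \<noteq> 0" using that by (auto simp: q'eq)
    thus ?thesis using W0 r0 by (metis less_eq_real_def)
  qed
  show ?thesis
  proof (cases "\<exists>(x,y)\<in>PS pX q. W x y = 0 \<or> r x y = 0")
    case True
    thus ?thesis using F_ninf[OF a1 p0 q0 True] by simp
  next
    case nA: False
    have pos: "\<forall>(x,y)\<in>PS pX q. 0 < W x y \<and> 0 < r x y"
    proof (intro ballI, clarify)
      fix x y assume "(x,y) \<in> PS pX q"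
      hence "W x y \<noteq> 0" "r x y \<noteq> 0" using nA by auto
      thus "0 < W x y \<and> 0 < r x y" using W0 r0 by (metis less_eq_real_def)
    qed
    have pos': "\<forall>(x,y)\<in>PS pX q'. 0 < W x y \<and> 0 < r x y"
      using q'pos PS_pos[OF p0 q'0] by auto
    have inner: "(\<Sum>y\<in>{y. 0 < q x y}. q x y *
        (\<alpha> / (1 - \<alpha>) * ln (q x y / W x y) + ln (r x y / pX x)))
      \<le> (\<Sum>y\<in>{y. 0 < q' x y}. q' x y *
        (\<alpha> / (1 - \<alpha>) * ln (q' x y / W x y) + ln (r x y / pX x)))"
      if px: "0 < pX x" for x
    proof -
      let ?a = "\<lambda>y. W x y * r x y powr b"
      have inPS: "(x,y) \<in> PS pX q" if "0 < q x y" for y using px that by (simp add: PS_def)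
      have Qs: "sum (q x) {y. 0 < q x y} = 1" using sumQ q0 q1 px by auto
      have Qs': "sum (q' x) {y. 0 < q' x y} = 1" using sumQ q'0 q'1 px by auto
      have Zx: "0 < Z x" using Zp px by (simp add: Z_def b_def)
      have apos: "0 < ?a y" if "0 < q x y" for y
      proof -
        have "0 < W x y" "0 < r x y" using pos inPS[OF that] by auto
        thus ?thesis by (simp add: powr_gt_zero)
      qed
      have "(\<Sum>y\<in>{y. 0 < q x y}. q x y *
          (\<alpha> / (1 - \<alpha>) * ln (q x y / W x y) + ln (r x y / pX x)))
          = (\<Sum>y\<in>{y. 0 < q x y}. c * (q x y * ln (?a y / q x y)) - q x y * ln (pX x))"
      proof (rule sum.cong[OF refl])
        fix y assume "y \<in> {y. 0 < q x y}"
        hence y: "0 < q x y" by simp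
        have wr: "0 < W x y" "0 < r x y" using pos inPS[OF y] by auto
        show "q x y * (\<alpha> / (1 - \<alpha>) * ln (q x y / W x y) + ln (r x y / pX x))
            = c * (q x y * ln (?a y / q x y)) - q x y * ln (pX x)"
          by (subst ident3[OF a1 y wr px]) (simp add: c_def b_def algebra_simps)
      qed
      also have "\<dots> = c * (\<Sum>y\<in>{y. 0 < q x y}. q x y * ln (?a y / q x y)) - ln (pX x)"
        by (simp add: sum_subtractf sum_distrib_left[symmetric] sum_distrib_right[symmetric] Qs)
      also have "\<dots> \<le> c * ln (sum ?a {y. 0 < q x y}) - ln (pX x)"
        using a1 by (simp, intro mult_left_mono gibbs) (use Qs apos in \<open>auto simp: c_def\<close>)
      also have "\<dots> \<le> c * ln (Z x) - ln (pX x)"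
      proof -
        have ne: "{y. 0 < q x y} \<noteq> {}" using Qs by (metis sum.empty zero_neq_one)
        have "ln (sum ?a {y. 0 < q x y}) \<le> ln (Z x)"
        proof (rule ln_mono)
          show "0 < sum ?a {y. 0 < q x y}" using ne apos by (intro sum_pos) auto
          show "sum ?a {y. 0 < q x y} \<le> Z x" unfolding Z_def
            by (rule sum_mono2) (use W0 in auto)
        qed
        moreover have "0 \<le> c" using a1 by (simp add: c_def)
        ultimately show ?thesis by (simp add: mult_left_mono)
      qed
      also have "\<dots> = (\<Sum>y\<in>{y. 0 < q' x y}. q' x y * (c * ln (Z x) - ln (pX x)))"
        by (simp add: sum_distrib_right[symmetric] Qs')
      also have "\<dots> = (\<Sum>y\<in>{y. 0 < q' x y}. q' x y *
          (\<alpha> / (1 - \<alpha>) * ln (q' x y / W x y) + ln (r x y / pX x)))"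
      proof (rule sum.cong[OF refl])
        fix y assume "y \<in> {y. 0 < q' x y}"
        hence y: "0 < q' x y" by simp
        have wr: "0 < W x y" "0 < r x y" using q'pos[OF y] by auto
        have "?a y / q' x y = Z x" using wr Zx by (simp add: q'eq powr_gt_zero)
        with ident3[OF a1 y wr px]
        show "q' x y * (c * ln (Z x) - ln (pX x)) = q' x y *
          (\<alpha> / (1 - \<alpha>) * ln (q' x y / W x y) + ln (r x y / pX x))"
          by (simp add: c_def b_def)
      qed
      finally show ?thesis .
    qed
    have "Lr \<alpha> pX W q r \<le> Lr \<alpha> pX W q' r"
      unfolding Lr_sigma[OF p0 q0] Lr_sigma[OF p0 q'0]
      by (rule sum_mono, rule mult_left_mono) (use inner p0 in auto)
    thus ?thesis using F_fin[OF p0 q0 pos] F_fin[OF p0 q'0 pos'] by (simp add: q'_def)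
  qed
qed

lemma rev_props:
  fixes pX :: "'a::finite \<Rightarrow> real" and q :: "'a \<Rightarrow> 'b::finite \<Rightarrow> real"
  assumes p0: "\<forall>x. 0 \<le> pX x" and q0: "\<forall>x y. 0 \<le> q x y"
  shows "\<forall>x y. 0 \<le> rev_update pX q x y"
    and "\<forall>y. (\<Sum>x\<in>UNIV. rev_update pX q x y) \<le> 1"
    and "\<forall>x y. 0 < pX x * q x y \<longrightarrow> 0 < rev_update pX q x y"
proof -
  define D where "D y = (\<Sum>x\<in>UNIV. pX x * q x y)" for y
  have r'eq: "rev_update pX q x y = pX x * q x y / D y" for x y
    by (simp add: rev_update_def D_def)
  have D0: "0 \<le> D y" for y unfolding D_def using p0 q0 by (auto intro: sum_nonneg)
  show "\<forall>x y. 0 \<le> rev_update pX q x y" using p0 q0 D0 by (simp add: r'eq)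
  show "\<forall>y. (\<Sum>x\<in>UNIV. rev_update pX q x y) \<le> 1"
  proof
    fix y
    have "(\<Sum>x\<in>UNIV. rev_update pX q x y) = D y / D y"
      by (simp add: r'eq sum_divide_distrib[symmetric] D_def)
    thus "(\<Sum>x\<in>UNIV. rev_update pX q x y) \<le> 1" by (cases "D y = 0") auto
  qed
  show "\<forall>x y. 0 < pX x * q x y \<longrightarrow> 0 < rev_update pX q x y"
  proof (intro allI impI)
    fix x y assume h: "0 < pX x * q x y"
    have "pX x * q x y \<le> D y" unfolding D_def
      by (rule member_le_sum) (use p0 q0 in auto)
    thus "0 < rev_update pX q x y" using h by (simp add: r'eq)
  qed
qed

lemma ch_props:
  fixes pX :: "'a::finite \<Rightarrow> real" and W r :: "'a \<Rightarrow> 'b::finite \<Rightarrow> real"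
  assumes W0: "\<forall>x y. 0 \<le> W x y" and r0: "\<forall>x y. 0 \<le> r x y"
    and Zp: "\<forall>x. 0 < pX x \<longrightarrow> 0 < (\<Sum>y\<in>UNIV. W x y * r x y powr (1 - 1 / \<alpha>))"
  shows "\<forall>x y. 0 \<le> ch_update \<alpha> W r x y"
    and "\<forall>x. 0 < pX x \<longrightarrow> sum (ch_update \<alpha> W r x) UNIV = 1"
    and "\<forall>x y. 0 < pX x \<longrightarrow> 0 < W x y \<longrightarrow> 0 < r x y \<longrightarrow> 0 < ch_update \<alpha> W r x y"
proof -
  define Z where "Z x = (\<Sum>y\<in>UNIV. W x y * r x y powr (1 - 1 / \<alpha>))" for x
  have q'eq: "ch_update \<alpha> W r x y = W x y * r x y powr (1 - 1 / \<alpha>) / Z x" for x y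
    by (simp add: ch_update_def Z_def)
  have Z0: "0 \<le> Z x" for x unfolding Z_def using W0 by (auto intro: sum_nonneg)
  show "\<forall>x y. 0 \<le> ch_update \<alpha> W r x y" using W0 Z0 by (auto simp: q'eq)
  show "\<forall>x. 0 < pX x \<longrightarrow> sum (ch_update \<alpha> W r x) UNIV = 1"
  proof (intro allI impI)
    fix x assume "0 < pX x"
    hence "0 < Z x" using Zp by (simp add: Z_def)
    thus "sum (ch_update \<alpha> W r x) UNIV = 1"
      by (simp add: q'eq sum_divide_distrib[symmetric] Z_def)
  qed
  show "\<forall>x y. 0 < pX x \<longrightarrow> 0 < W x y \<longrightarrow> 0 < r x y \<longrightarrow> 0 < ch_update \<alpha> W r x y"
  proof (intro allI impI)
    fix x y assume "0 < pX x" "0 < W x y" "0 < r x y"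
    moreover have "0 < Z x" using Zp \<open>0 < pX x\<close> by (simp add: Z_def)
    ultimately show "0 < ch_update \<alpha> W r x y" by (simp add: q'eq powr_gt_zero)
  qed
qed

lemma Zpos:
  fixes pX :: "'a::finite \<Rightarrow> real" and W q :: "'a \<Rightarrow> 'b::finite \<Rightarrow> real"
  assumes p0: "\<forall>x. 0 \<le> pX x" and W0: "\<forall>x y. 0 \<le> W x y" and q0: "\<forall>x y. 0 \<le> q x y"
    and ex: "\<forall>x. 0 < pX x \<longrightarrow> (\<exists>y. 0 < W x y \<and> 0 < q x y)"
  shows "\<forall>x. 0 < pX x \<longrightarrow> 0 < (\<Sum>y\<in>UNIV. W x y * rev_update pX q x y powr (1 - 1 / \<alpha>))"
proof (intro allI impI)
  fix x assume px: "0 < pX x"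
  then obtain y where y: "0 < W x y" "0 < q x y" using ex by auto
  have "0 < rev_update pX q x y" using rev_props(3)[OF p0 q0] px y by simp
  hence "0 < W x y * rev_update pX q x y powr (1 - 1 / \<alpha>)" using y by (simp add: powr_gt_zero)
  also have "\<dots> \<le> (\<Sum>y\<in>UNIV. W x y * rev_update pX q x y powr (1 - 1 / \<alpha>))"
    by (rule member_le_sum) (use W0 in auto)
  finally show "0 < (\<Sum>y\<in>UNIV. W x y * rev_update pX q x y powr (1 - 1 / \<alpha>))" .
qed

theorem lemma3:
  fixes \<alpha> :: real and pX :: "'a::finite \<Rightarrow> real" and W q0 :: "'a \<Rightarrow> 'b::finite \<Rightarrow> real"
  assumes "1 < \<alpha>"
    and "is_dist pX"
    and "is_channel W"
    and "is_channel q0"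
    and "\<And>x. 0 < pX x \<Longrightarrow> \<exists>y. 0 < W x y \<and> 0 < q0 x y"
  shows "\<forall>k. F_C \<alpha> pX W (q_iter \<alpha> pX W q0 k) (r_iter \<alpha> pX W q0 k)
              \<le> F_C \<alpha> pX W (q_iter \<alpha> pX W q0 (Suc k)) (r_iter \<alpha> pX W q0 k)
           \<and> F_C \<alpha> pX W (q_iter \<alpha> pX W q0 (Suc k)) (r_iter \<alpha> pX W q0 k)
              \<le> F_C \<alpha> pX W (q_iter \<alpha> pX W q0 (Suc k)) (r_iter \<alpha> pX W q0 (Suc k))
           \<and> F_C \<alpha> pX W (q_iter \<alpha> pX W q0 k) (r_iter \<alpha> pX W q0 k)
              \<le> augustin_csiszar_MI \<alpha> pX W
           \<and> F_C \<alpha> pX W (q_iter \<alpha> pX W q0 (Suc k)) (r_iter \<alpha> pX W q0 k)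
              \<le> augustin_csiszar_MI \<alpha> pX W"
proof -
  note a1 = assms(1) and pd = assms(2) and Wc = assms(3)
  have p0: "\<forall>x. 0 \<le> pX x" using pd by (auto simp: is_dist_def)
  have W0: "\<forall>x y. 0 \<le> W x y" using Wc by (auto simp: is_channel_def is_dist_def)
  define Q where "Q = q_iter \<alpha> pX W q0"
  define R where "R k = rev_update pX (Q k)" for k
  have RR: "r_iter \<alpha> pX W q0 k = R k" for k by (simp add: r_iter_def R_def Q_def)
  have QS: "Q (Suc k) = ch_update \<alpha> W (R k)" for k by (simp add: Q_def R_def)
  define Inv where "Inv k \<longleftrightarrow> (\<forall>x y. 0 \<le> Q k x y) \<and> (\<forall>x. 0 < pX x \<longrightarrow> sum (Q k x) UNIV = 1)
      \<and> (\<forall>x. 0 < pX x \<longrightarrow> (\<exists>y. 0 < W x y \<and> 0 < Q k x y))" for k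
  have inv: "Inv k" for k
  proof (induction k)
    case 0
    show ?case using assms(4,5) by (auto simp: Inv_def Q_def is_channel_def is_dist_def)
  next
    case (Suc k)
    hence i0: "\<forall>x y. 0 \<le> Q k x y" and i2: "\<forall>x. 0 < pX x \<longrightarrow> (\<exists>y. 0 < W x y \<and> 0 < Q k x y)"
      by (auto simp: Inv_def)
    have r0: "\<forall>x y. 0 \<le> R k x y" using rev_props(1)[OF p0 i0] by (simp add: R_def)
    have Zp: "\<forall>x. 0 < pX x \<longrightarrow> 0 < (\<Sum>y\<in>UNIV. W x y * R k x y powr (1 - 1 / \<alpha>))"
      using Zpos[OF p0 W0 i0 i2] by (simp add: R_def)
    note ch = ch_props[OF W0 r0 Zp]
    have ex: "\<forall>x. 0 < pX x \<longrightarrow> (\<exists>y. 0 < W x y \<and> 0 < Q (Suc k) x y)"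
    proof (intro allI impI)
      fix x assume px: "0 < pX x"
      then obtain y where y: "0 < W x y" "0 < Q k x y" using i2 by auto
      have "0 < R k x y" using rev_props(3)[OF p0 i0] px y by (simp add: R_def)
      thus "\<exists>y. 0 < W x y \<and> 0 < Q (Suc k) x y" using ch(3) px y by (auto simp: QS)
    qed
    show ?case unfolding Inv_def using ch(1,2) ex by (simp add: QS)
  qed
  show ?thesis
  proof
    fix k
    have i0: "\<forall>x y. 0 \<le> Q k x y" and i1: "\<forall>x. 0 < pX x \<longrightarrow> sum (Q k x) UNIV = 1"
      and i2: "\<forall>x. 0 < pX x \<longrightarrow> (\<exists>y. 0 < W x y \<and> 0 < Q k x y)"
      using inv[of k] by (auto simp: Inv_def)
    have j0: "\<forall>x y. 0 \<le> Q (Suc k) x y" and j1: "\<forall>x. 0 < pX x \<longrightarrow> sum (Q (Suc k) x) UNIV = 1"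
      using inv[of "Suc k"] by (auto simp: Inv_def)
    have r0: "\<forall>x y. 0 \<le> R k x y" and r1: "\<forall>y. (\<Sum>x\<in>UNIV. R k x y) \<le> 1"
      using rev_props(1,2)[OF p0 i0] by (simp_all add: R_def)
    have Zp: "\<forall>x. 0 < pX x \<longrightarrow> 0 < (\<Sum>y\<in>UNIV. W x y * R k x y powr (1 - 1 / \<alpha>))"
      using Zpos[OF p0 W0 i0 i2] by (simp add: R_def)
    have s1: "F_C \<alpha> pX W (Q k) (R k) \<le> F_C \<alpha> pX W (Q (Suc k)) (R k)"
      using qstep[OF a1 pd Wc i0 i1 r0 Zp] by (simp add: QS)
    have s2: "F_C \<alpha> pX W (Q (Suc k)) (R k) \<le> F_C \<alpha> pX W (Q (Suc k)) (R (Suc k))"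
      using rstep[OF a1 pd Wc j0 j1 r0 r1] by (simp add: R_def)
    have s3: "F_C \<alpha> pX W (Q k) (R k) \<le> augustin_csiszar_MI \<alpha> pX W"
      unfolding augustin_csiszar_MI_def
      by (rule INF_greatest) (use upper[OF a1 pd Wc i0 i1 r0 r1] in auto)
    have s4: "F_C \<alpha> pX W (Q (Suc k)) (R k) \<le> augustin_csiszar_MI \<alpha> pX W"
      unfolding augustin_csiszar_MI_def
      by (rule INF_greatest) (use upper[OF a1 pd Wc j0 j1 r0 r1] in auto)
    show "F_C \<alpha> pX W (q_iter \<alpha> pX W q0 k) (r_iter \<alpha> pX W q0 k)
              \<le> F_C \<alpha> pX W (q_iter \<alpha> pX W q0 (Suc k)) (r_iter \<alpha> pX W q0 k)
           \<and> F_C \<alpha> pX W (q_iter \<alpha> pX W q0 (Suc k)) (r_iter \<alpha> pX W q0 k)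
              \<le> F_C \<alpha> pX W (q_iter \<alpha> pX W q0 (Suc k)) (r_iter \<alpha> pX W q0 (Suc k))
           \<and> F_C \<alpha> pX W (q_iter \<alpha> pX W q0 k) (r_iter \<alpha> pX W q0 k)
              \<le> augustin_csiszar_MI \<alpha> pX W
           \<and> F_C \<alpha> pX W (q_iter \<alpha> pX W q0 (Suc k)) (r_iter \<alpha> pX W q0 k)
              \<le> augustin_csiszar_MI \<alpha> pX W"
      unfolding RR using s1 s2 s3 s4 by (simp add: Q_def)
  qed
qed

end
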